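(* Let $\mathbf{FL}=(FL_0,FL_1,\dots)$ be any sequence of recommendations maximizing long-term engagement, let $(\mathcal U^*,\mathcal C^* )$ be any maximum stable set with recommendation $R^*$, and let $\mathbf{ALG}=(ALG_0,ALG_1,\dots)$ be the sequence with $ALG_t(i)=R^*(i)$ for all $t$ and all $i\in\mathcal U^*$ (and, at $t=0$, $ALG_0(i)$ an arbitrary subset of $\mathcal C^*$ of size $K$ for users $i\in\mathcal U_0\setminus\mathcal U^*$). Then $\mathrm{LTE}(\mathbf{FL})=\mathrm{LTE}(\mathbf{ALG})$.
   Context: An instance consists of a dimension $D$, users $\mathcal U_0=\{1,\dots,U\}$ with types $u_i\in\mathbb R^D_{\ge0}$, creators $\mathcal C_0=\{1,\dots,C\}$ with types $c_j\in\mathbb R^D_{\ge 0}$, all of Euclidean norm $1$, a positive integer $K$, a creator threshold $\bar a\in\mathbb N_0$ and a user threshold $\bar e\in[0,1]$. At time $t=0,1,\dots$ the platform has sets $\mathcal U_t,\mathcal C_t$ and chooses $R_t$ assigning each $i\in\mathcal U_t$ a set $R_t(i)\subseteq\mathcal C_t$ of size $K$ (smaller only if necessary). Engagement $E(\mathcal U,\mathcal C,R)=\sum_{i\in\mathcal U}\sum_{j\in R(i)}u_i^Tc_j$. Then $\mathcal U_{t+1}=\{i\in\mathcal U_t:|R_t(i)|=K,\ u_i^Tc_j\ge\bar e\ \forall j\in R_t(i)\}$, $\mathcal C_{t+1}=\{j\in\mathcal C_t:|\{i\in\mathcal U_t:j\in R_t(i)\}|\ge\bar a\}$. $\mathrm{LTE}(\mathbf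 R)=\lim_{T\to\infty}\frac1T\sum_{t<T}E(\mathcal U_t,\mathcal C_t,R_t)$. $(\mathcal U,\mathcal C)$ with $\mathcal U\subseteq\mathcal U_0$, $\mathcal C\subseteq\mathcal C_0$ is a stable set with recommendation $R$ if $R(i)\subseteq\mathcal C$, $|R(i)|=K$ and $u_i^Tc_j\ge\bar e$ for all $i\in\mathcal U$, $j\in R(i)$, and $|\{i\in\mathcal U:j\in R(i)\}|\ge\bar a$ for all $j\in\mathcal C$; a maximum stable set maximizes $E(\mathcal U,\mathcal C,R)$ among all stable sets with recommendations. *)

theory Defs
  imports "HOL-Analysis.Analysis"
begin

text \<open>An instance. Users are 1..nU, creators are 1..nC; the dimension D is
  the cardinality of the finite index type 'd.\<close>
record 'd inst =
  nU :: nat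
  nC :: nat
  ut :: "nat \<Rightarrow> real ^ 'd"
  ct :: "nat \<Rightarrow> real ^ 'd"
  Kr :: nat
  abar :: nat
  ebar :: real

definition instance_ok :: "'d::finite inst \<Rightarrow> bool" where
  "instance_ok I \<longleftrightarrow>
     Kr I > 0 \<and> 0 \<le> ebar I \<and> ebar I \<le> 1 \<and>
     (\<forall>i\<in>{1..nU I}. norm (ut I i) = 1 \<and> (\<forall>k. 0 \<le> ut I i $ k)) \<and>
     (\<forall>j\<in>{1..nC I}. norm (ct I j) = 1 \<and> (\<forall>k. 0 \<le> ct I j $ k))"

definition engagement :: "'d::finite inst \<Rightarrow> nat set \<Rightarrow> (nat \<Rightarrow> nat set) \<Rightarrow> real" where
  "engagement I Us R = (\<Sum>i\<in>Us. \<Sum>j\<in>R i. ut I i \<bullet> ct I j)"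

text \<open>The sets (U_t, C_t) induced by a recommendation sequence R (time \<Rightarrow> user \<Rightarrow> creators).\<close>
fun states :: "'d::finite inst \<Rightarrow> (nat \<Rightarrow> nat \<Rightarrow> nat set) \<Rightarrow> nat \<Rightarrow> nat set \<times> nat set" where
  "states I R 0 = ({1..nU I}, {1..nC I})"
| "states I R (Suc t) =
     (let Us = fst (states I R t); Cs = snd (states I R t) in
      ({i\<in>Us. card (R t i) = Kr I \<and> (\<forall>j\<in>R t i. ebar I \<le> ut I i \<bullet> ct I j)},
       {j\<in>Cs. abar I \<le> card {i\<in>Us. j \<in> R t i}}))"

abbreviation users_at where "users_at I R t \<equiv> fst (states I R t)"
abbreviation creators_at where "creators_at I R t \<equiv> snd (states I R t)"

definition valid_seq :: "'d::finite inst \<Rightarrow> (nat \<Rightarrow> nat \<Rightarrow> nat set) \<Rightarrow> bool" where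
  "valid_seq I R \<longleftrightarrow>
     (\<forall>t. \<forall>i\<in>users_at I R t.
        R t i \<subseteq> creators_at I R t \<and> card (R t i) = min (Kr I) (card (creators_at I R t)))"

definition avg_eng :: "'d::finite inst \<Rightarrow> (nat \<Rightarrow> nat \<Rightarrow> nat set) \<Rightarrow> nat \<Rightarrow> real" where
  "avg_eng I R T = (1 / real T) * (\<Sum>t<T. engagement I (users_at I R t) (R t))"

definition has_LTE :: "'d::finite inst \<Rightarrow> (nat \<Rightarrow> nat \<Rightarrow> nat set) \<Rightarrow> bool" where
  "has_LTE I R \<longleftrightarrow> convergent (avg_eng I R)"

definition LTE :: "'d::finite inst \<Rightarrow> (nat \<Rightarrow> nat \<Rightarrow> nat set) \<Rightarrow> real" where
  "LTE I R = lim (avg_eng I R)"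

definition maximizes_LTE :: "'d::finite inst \<Rightarrow> (nat \<Rightarrow> nat \<Rightarrow> nat set) \<Rightarrow> bool" where
  "maximizes_LTE I R \<longleftrightarrow> valid_seq I R \<and> has_LTE I R \<and>
     (\<forall>R'. valid_seq I R' \<and> has_LTE I R' \<longrightarrow> LTE I R' \<le> LTE I R)"

definition stable_set :: "'d::finite inst \<Rightarrow> nat set \<Rightarrow> nat set \<Rightarrow> (nat \<Rightarrow> nat set) \<Rightarrow> bool" where
  "stable_set I Us Cs R \<longleftrightarrow> Us \<subseteq> {1..nU I} \<and> Cs \<subseteq> {1..nC I} \<and>
     (\<forall>i\<in>Us. R i \<subseteq> Cs \<and> card (R i) = Kr I \<and> (\<forall>j\<in>R i. ebar I \<le> ut I i \<bullet> ct I j)) \<and>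
     (\<forall>j\<in>Cs. abar I \<le> card {i\<in>Us. j \<in> R i})"

definition max_stable_set :: "'d::finite inst \<Rightarrow> nat set \<Rightarrow> nat set \<Rightarrow> (nat \<Rightarrow> nat set) \<Rightarrow> bool" where
  "max_stable_set I Us Cs R \<longleftrightarrow> stable_set I Us Cs R \<and>
     (\<forall>Us' Cs' R'. stable_set I Us' Cs' R' \<longrightarrow> engagement I Us' R' \<le> engagement I Us R)"

end

theory Submission
  imports Defs
begin

lemma users_dec: "users_at I R (Suc t) \<subseteq> users_at I R t"
  by (auto simp: Let_def)

lemma creators_dec: "creators_at I R (Suc t) \<subseteq> creators_at I R t"
  by (auto simp: Let_def)

lemma users_antimono: "t \<le> t' \<Longrightarrow> users_at I R t' \<subseteq> users_at I R t"
  by (rule lift_Suc_antimono_le[of "\<lambda>t. users_at I R t"]) (rule users_dec)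

lemma creators_antimono: "t \<le> t' \<Longrightarrow> creators_at I R t' \<subseteq> creators_at I R t"
  by (rule lift_Suc_antimono_le[of "\<lambda>t. creators_at I R t"]) (rule creators_dec)

lemma users_sub: "users_at I R t \<subseteq> {1..nU I}"
  using users_antimono[of 0 t I R] by simp

lemma creators_sub: "creators_at I R t \<subseteq> {1..nC I}"
  using creators_antimono[of 0 t I R] by simp

lemma users_fin: "finite (users_at I R t)"
  by (rule finite_subset[OF users_sub]) simp

lemma creators_fin: "finite (creators_at I R t)"
  by (rule finite_subset[OF creators_sub]) simp

lemma stabilizes: "\<exists>T0. \<forall>t\<ge>T0. states I R t = states I R T0"
proof -
  define f where "f t = card (users_at I R t) + card (creators_at I R t)" for t
  define m where "m = (LEAST v. \<exists>t. f t = v)"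
  have ex: "\<exists>t. f t = m" unfolding m_def by (rule LeastI[of _ "f 0"]) (rule exI[of _ 0], rule refl)
  then obtain T0 where T0: "f T0 = m" by blast
  have mle: "m \<le> f t" for t unfolding m_def by (rule Least_le) (rule exI[of _ t], rule refl)
  show ?thesis
  proof (intro exI allI impI)
    fix t assume tt: "T0 \<le> t"
    have s1: "users_at I R t \<subseteq> users_at I R T0" by (rule users_antimono[OF tt])
    have s2: "creators_at I R t \<subseteq> creators_at I R T0" by (rule creators_antimono[OF tt])
    have f1: "finite (users_at I R T0)" by (rule users_fin)
    have f2: "finite (creators_at I R T0)" by (rule creators_fin)
    have c1: "card (users_at I R t) \<le> card (users_at I R T0)" by (rule card_mono[OF f1 s1])
    have c2: "card (creators_at I R t) \<le> card (creators_at I R T0)" by (rule card_mono[OF f2 s2])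
    have "f T0 \<le> f t" using T0 mle[of t] by simp
    then have "card (users_at I R T0) + card (creators_at I R T0) \<le> card (users_at I R t) + card (creators_at I R t)"
      unfolding f_def .
    then have e1: "card (users_at I R t) = card (users_at I R T0)"
      and e2: "card (creators_at I R t) = card (creators_at I R T0)"
      using c1 c2 by linarith+
    have "users_at I R t = users_at I R T0" by (rule card_subset_eq[OF f1 s1 e1])
    moreover have "creators_at I R t = creators_at I R T0" by (rule card_subset_eq[OF f2 s2 e2])
    ultimately show "states I R t = states I R T0" by (rule prod_eqI)
  qed
qed

lemma stable_late:
  assumes v: "valid_seq I R" and T0: "\<forall>t\<ge>T0. states I R t = states I R T0" and t: "T0 \<le> t"
  shows "stable_set I (users_at I R t) (creators_at I R t) (R t)"
proof -
  have e1: "states I R (Suc t) = states I R T0" using T0 t le_SucI by blast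
  have e2: "states I R t = states I R T0" using T0 t by blast
  have eq: "states I R (Suc t) = states I R t" by (rule trans[OF e1 e2[symmetric]])
  let ?U = "users_at I R t" and ?C = "creators_at I R t"
  have A1: "users_at I R (Suc t) = {i\<in>?U. card (R t i) = Kr I \<and> (\<forall>j\<in>R t i. ebar I \<le> ut I i \<bullet> ct I j)}"
    by (simp only: states.simps Let_def fst_conv)
  have A2: "creators_at I R (Suc t) = {j\<in>?C. abar I \<le> card {i\<in>?U. j \<in> R t i}}"
    by (simp only: states.simps Let_def snd_conv)
  have u: "{i\<in>?U. card (R t i) = Kr I \<and> (\<forall>j\<in>R t i. ebar I \<le> ut I i \<bullet> ct I j)} = ?U"
    by (rule trans[OF A1[symmetric] arg_cong[OF eq, of fst]])
  have c: "{j\<in>?C. abar I \<le> card {i\<in>?U. j \<in> R t i}} = ?C"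
    by (rule trans[OF A2[symmetric] arg_cong[OF eq, of snd]])
  show ?thesis unfolding stable_set_def
  proof (intro conjI ballI)
    show "?U \<subseteq> {1..nU I}" by (rule users_sub)
    show "?C \<subseteq> {1..nC I}" by (rule creators_sub)
  next
    fix i assume "i \<in> ?U"
    then show "R t i \<subseteq> ?C" using v unfolding valid_seq_def by simp
    show "card (R t i) = Kr I" using u \<open>i \<in> ?U\<close> by blast
    show "ebar I \<le> ut I i \<bullet> ct I j" if "j \<in> R t i" for j using u \<open>i \<in> ?U\<close> that by blast
  next
    fix j assume "j \<in> ?C"
    then show "abar I \<le> card {i\<in>?U. j \<in> R t i}" using c by blast
  qed
qed

lemma avg_le:
  fixes a :: "nat \<Rightarrow> real"
  assumes "\<forall>t\<ge>N. a t \<le> c" and "N \<le> T" and "T > 0"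
  shows "(1 / real T) * (\<Sum>t<T. a t) \<le> (\<Sum>t<N. a t - c) / real T + c"
proof -
  have split: "(\<Sum>t<T. a t) = (\<Sum>t<N. a t) + (\<Sum>t\<in>{N..<T}. a t)"
    using assms(2) by (simp add: lessThan_atLeast0 sum.atLeastLessThan_concat)
  have "(\<Sum>t\<in>{N..<T}. a t) \<le> (\<Sum>t\<in>{N..<T}. c)" using assms(1) by (intro sum_mono) auto
  then have "(\<Sum>t<T. a t) \<le> (\<Sum>t<N. a t) + (real T - real N) * c"
    using split assms(2) by (simp add: of_nat_diff)
  moreover have "(\<Sum>t<N. a t - c) = (\<Sum>t<N. a t) - real N * c" by (simp add: sum_subtractf)
  ultimately show ?thesis using assms(3)
    by (simp add: field_simps)
qed

lemma avg_ge:
  fixes a :: "nat \<Rightarrow> real"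
  assumes "\<forall>t\<ge>N. c \<le> a t" and "N \<le> T" and "T > 0"
  shows "(\<Sum>t<N. a t - c) / real T + c \<le> (1 / real T) * (\<Sum>t<T. a t)"
proof -
  have "(1 / real T) * (\<Sum>t<T. - a t) \<le> (\<Sum>t<N. - a t - (- c)) / real T + (- c)"
    using avg_le[of N "\<lambda>t. - a t" "- c" T] assms by auto
  moreover have "(\<Sum>t<N. - a t - (- c)) = - (\<Sum>t<N. a t - c)" by (simp add: sum_negf[symmetric])
  ultimately show ?thesis by (simp add: sum_negf)
qed

lemma aux_lim: "(\<lambda>T. (B::real) / real T + c) \<longlonglongrightarrow> c"
proof -
  have "(\<lambda>T. B / real T + c) \<longlonglongrightarrow> 0 + c"
    by (intro tendsto_add lim_const_over_n tendsto_const)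
  then show ?thesis by simp
qed

theorem proposition1:
  fixes I :: "'d::finite inst"
    and FL ALG :: "nat \<Rightarrow> nat \<Rightarrow> nat set"
    and Ustar Cstar :: "nat set" and Rstar :: "nat \<Rightarrow> nat set"
  assumes "instance_ok I"
    and "maximizes_LTE I FL"
    and "max_stable_set I Ustar Cstar Rstar"
    and "valid_seq I ALG"
    and "\<forall>t. \<forall>i\<in>Ustar. ALG t i = Rstar i"
    and "\<forall>i\<in>{1..nU I} - Ustar. ALG 0 i \<subseteq> Cstar \<and> card (ALG 0 i) = Kr I"
  shows "has_LTE I ALG \<and> LTE I FL = LTE I ALG"
proof -
  let ?E = "engagement I Ustar Rstar"
  have st: "stable_set I Ustar Cstar Rstar" and mx: "\<And>U C R. stable_set I U C R \<Longrightarrow> engagement I U R \<le> ?E"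
    using assms(3) unfolding max_stable_set_def by blast+
  have ok: "instance_ok I" by fact
  have vA: "valid_seq I ALG" by fact
  have AR: "\<And>t i. i \<in> Ustar \<Longrightarrow> ALG t i = Rstar i" using assms(5) by blast
  have inv: "Ustar \<subseteq> users_at I ALG t \<and> Cstar \<subseteq> creators_at I ALG t" for t
  proof (induction t)
    case 0
    then show ?case using st unfolding stable_set_def by simp
  next
    case (Suc t)
    have A: "Ustar \<subseteq> users_at I ALG (Suc t)"
    proof
      fix i assume i: "i \<in> Ustar"
      then have "card (ALG t i) = Kr I \<and> (\<forall>j\<in>ALG t i. ebar I \<le> ut I i \<bullet> ct I j)"
        using st AR[OF i] unfolding stable_set_def by simp
      then show "i \<in> users_at I ALG (Suc t)" using Suc i by (auto simp: Let_def)
    qed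
    have B: "Cstar \<subseteq> creators_at I ALG (Suc t)"
    proof
      fix j assume j: "j \<in> Cstar"
      have "abar I \<le> card {i\<in>Ustar. j \<in> Rstar i}" using st j unfolding stable_set_def by blast
      also have "\<dots> \<le> card {i\<in>users_at I ALG t. j \<in> ALG t i}"
      proof (rule card_mono)
        show "finite {i\<in>users_at I ALG t. j \<in> ALG t i}"
          using users_fin[of I ALG t] by simp
        show "{i\<in>Ustar. j \<in> Rstar i} \<subseteq> {i\<in>users_at I ALG t. j \<in> ALG t i}" using Suc AR by auto
      qed
      finally show "j \<in> creators_at I ALG (Suc t)" using Suc j by (auto simp: Let_def)
    qed
    show ?case using A B by blast
  qed
  have lowA: "?E \<le> engagement I (users_at I ALG t) (ALG t)" for t
  proof -
    have "?E = (\<Sum>i\<in>Ustar. \<Sum>j\<in>ALG t i. ut I i \<bullet> ct I j)"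
      unfolding engagement_def using AR by simp
    also have "\<dots> \<le> (\<Sum>i\<in>users_at I ALG t. \<Sum>j\<in>ALG t i. ut I i \<bullet> ct I j)"
    proof (rule sum_mono2)
      show "finite (users_at I ALG t)" by (rule users_fin)
      show "Ustar \<subseteq> users_at I ALG t" using inv[of t] by simp
    next
      fix i assume i: "i \<in> users_at I ALG t - Ustar"
      show "0 \<le> (\<Sum>j\<in>ALG t i. ut I i \<bullet> ct I j)"
      proof (rule sum_nonneg)
        fix j assume "j \<in> ALG t i"
        moreover have "ALG t i \<subseteq> creators_at I ALG t"
          using vA i unfolding valid_seq_def by simp
        ultimately have "j \<in> {1..nC I}" using creators_sub[of I ALG t] by blast
        moreover have "i \<in> {1..nU I}" using i users_sub[of I ALG t] by blast
        moreover have "\<forall>i\<in>{1..nU I}. (\<forall>k. 0 \<le> ut I i $ k)"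
          "\<forall>j\<in>{1..nC I}. (\<forall>k. 0 \<le> ct I j $ k)"
          using ok unfolding instance_ok_def by simp_all
        ultimately have "\<forall>k. 0 \<le> ut I i $ k" "\<forall>k. 0 \<le> ct I j $ k" by simp_all
        then show "0 \<le> ut I i \<bullet> ct I j" unfolding inner_vec_def
          by (intro sum_nonneg) simp
      qed
    qed
    finally show ?thesis unfolding engagement_def .
  qed
  have upper: "\<exists>T0. \<forall>t\<ge>T0. engagement I (users_at I R t) (R t) \<le> ?E" if "valid_seq I R" for R
  proof -
    obtain T0 where T0: "\<forall>t\<ge>T0. states I R t = states I R T0" using stabilizes by blast
    show ?thesis using mx stable_late[OF that T0] by blast
  qed
  obtain T0 where T0: "\<forall>t\<ge>T0. engagement I (users_at I ALG t) (ALG t) \<le> ?E"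
    using upper[OF vA] by blast
  define a where "a t = engagement I (users_at I ALG t) (ALG t)" for t
  have aeq: "\<forall>t\<ge>T0. a t = ?E" using T0 lowA a_def by (simp add: order_antisym)
  have limA: "avg_eng I ALG \<longlonglongrightarrow> ?E"
  proof (rule tendsto_sandwich[OF _ _ aux_lim[of "\<Sum>t<T0. a t - ?E"] aux_lim[of "\<Sum>t<T0. a t - ?E"]])
    have "eventually (\<lambda>T. T \<ge> Suc T0) sequentially" by (rule eventually_ge_at_top)
    then show "\<forall>\<^sub>F n in sequentially. (\<Sum>t<T0. a t - ?E) / real n + ?E \<le> avg_eng I ALG n"
      by eventually_elim (use aeq avg_ge[of T0 ?E a] in \<open>auto simp: avg_eng_def a_def\<close>)
    have "eventually (\<lambda>T. T \<ge> Suc T0) sequentially" by (rule eventually_ge_at_top)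
    then show "\<forall>\<^sub>F n in sequentially. avg_eng I ALG n \<le> (\<Sum>t<T0. a t - ?E) / real n + ?E"
      by eventually_elim (use aeq avg_le[of T0 a ?E] in \<open>auto simp: avg_eng_def a_def\<close>)
  qed
  have hA: "has_LTE I ALG" unfolding has_LTE_def using limA convergentI by blast
  have LA: "LTE I ALG = ?E" unfolding LTE_def using limA limI by blast
  have vF: "valid_seq I FL" and hF: "has_LTE I FL" and geF: "LTE I ALG \<le> LTE I FL"
    using assms(2) vA hA unfolding maximizes_LTE_def by blast+
  obtain T1 where T1: "\<forall>t\<ge>T1. engagement I (users_at I FL t) (FL t) \<le> ?E"
    using upper[OF vF] by blast
  define b where "b t = engagement I (users_at I FL t) (FL t)" for t
  have limF: "avg_eng I FL \<longlonglongrightarrow> LTE I FL"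
    using hF unfolding has_LTE_def LTE_def by (simp add: convergent_LIMSEQ_iff)
  have "LTE I FL \<le> ?E"
  proof (rule LIMSEQ_le[OF limF aux_lim[of "\<Sum>t<T1. b t - ?E"]])
    show "\<exists>N. \<forall>n\<ge>N. avg_eng I FL n \<le> (\<Sum>t<T1. b t - ?E) / real n + ?E"
      using T1 avg_le[of T1 b ?E] by (intro exI[of _ "Suc T1"]) (auto simp: avg_eng_def b_def)
  qed
  then have "LTE I FL = LTE I ALG" using LA geF by linarith
  then show ?thesis using hA by blast
qed

end
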